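(* Let $k\ge1$, and let $\mathcal P=\{p_1,\dots,p_{k^2}\}$ be a family of real polynomials in the commuting variables $x_1,\dots,x_{2k^2}$ admitting an nc representation $p(X,Y)$ of degree $d>1$. Let $t\ge2$ and suppose $$p(X,Y)=e_1(XY)^t+e_2(YX)^t+e_3X^{2t}+e_4Y^{2t}+q(X,Y),$$ where $q$ contains no scalar multiples of $(XY)^t,(YX)^t,X^{2t},Y^{2t}$, and $e_1,e_2,e_3,e_4$ are pairwise distinct real numbers. Then, counting terms over all polynomials of the family, the family contains: exactly $k^2-k$ terms of the form $e_1x_u^tx_v^t$ with $u\ne v$ if $e_1\ne0$; exactly $k^2-k$ such terms with coefficient $e_2$ if $e_2\ne0$; exactly $k^2-k$ such terms with coefficient $e_3$ if $e_3\ne0$; exactly $k^2-k$ such terms with coefficient $e_4$ if $e_4\ne0$; exactly $k$ such terms with coefficient $\varphi(t,t)$ if $\varphi(t,t)\ne0$; exactly $k$ one letter terms $e_3x_u^{2t}$ if $e_3\ne0$; and exactly $k$ one letter terms $e_4x_u^{2t}$ if $e_4\ne0$. These account for all one letter terms of degree $2t$ and all two letter terms of the form $cx_u^tx_v^t$ ($u\ne v$, $c\ne0$) in the family. Moreover, each of the $k$ polynomials on the diagonal of the array $p(X,Y)$ contains $(\chi(e_1)+\chi(e_2)+\chi(e_3)+\chi(e_4))(k-1)$ terms of the form $cx_u^tx_v^t$ ($u\ne v$) built from off-diagonal entries of $X,Y$ and $\chi(\varphi(t,t))$ such terms built from diagonal entries, as well as exactly one one letter term of degree $2t$ with coefficient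 $e_3$ and exactly one with coefficient $e_4$, whose letters are diagonal entries; and no off-diagonal polynomial of the array contains any term of the form $cx_u^tx_v^t$ with $u\ne v$, $c\ne0$.
   Context: The family $\mathcal P$ admits an nc representation $p(X,Y)$ if there are $k\times k$ matrices $X,Y$ whose $2k^2$ entries are the variables $x_1,\dots,x_{2k^2}$, each used exactly once, and a noncommutative polynomial $p$ in two letters with real coefficients such that the matrix $p(X,Y)$ is a $k\times k$ array whose entries are $p_1,\dots,p_{k^2}$, each exactly once. A "term" of a polynomial means a monomial with its nonzero coefficient after collecting like terms. $\varphi(i,j)$ is the sum of coefficients of all monomials of $p$ of degree $i$ in $X$ and $j$ in $Y$. $\chi(a)=1$ if $a\ne0$ and $\chi(a)=0$ if $a=0$. *)

theory Defs
  imports Complex_Main "HOL-Library.Multiset"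
begin

text \<open>Noncommutative polynomials in two letters: functions from words to real
coefficients (finitely supported).  Letter False = X, letter True = Y.
Commutative monomials in the variables x_1, x_2, ... are multisets of
variable indices; a commutative polynomial is a map monomial -> coefficient.\<close>

type_synonym ncpoly = "bool list \<Rightarrow> real"

definition nc_support :: "ncpoly \<Rightarrow> bool list set" where
  "nc_support p = {w. p w \<noteq> 0}"

definition nc_degree :: "ncpoly \<Rightarrow> nat" where
  "nc_degree p = Max (length ` nc_support p)"

definition wXY :: "nat \<Rightarrow> bool list" where "wXY t = concat (replicate t [False, True])"
definition wYX :: "nat \<Rightarrow> bool list" where "wYX t = concat (replicate t [True, False])"
definition wX  :: "nat \<Rightarrow> bool list" where "wX n = replicate n False"
definition wY  :: "nat \<Rightarrow> bool list" where "wY n = replicate n True"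

definition phi :: "ncpoly \<Rightarrow> nat \<Rightarrow> nat \<Rightarrow> real" where
  "phi p i j = (\<Sum>w\<in>{w\<in>nc_support p. count_list w False = i \<and> count_list w True = j}. p w)"

definition chi :: "real \<Rightarrow> nat" where "chi a = (if a \<noteq> 0 then 1 else 0)"

definition paths :: "nat \<Rightarrow> nat \<Rightarrow> nat \<Rightarrow> nat \<Rightarrow> nat list set" where
  "paths k i j n = {ps. length ps = Suc n \<and> hd ps = i \<and> last ps = j \<and> set ps \<subseteq> {..<k}}"

text \<open>The commutative monomial obtained from word w along index path ps, where
var b r s is the variable in entry (r,s) of X (b = False) or Y (b = True).\<close>
definition wmono :: "(bool \<Rightarrow> nat \<Rightarrow> nat \<Rightarrow> nat) \<Rightarrow> bool list \<Rightarrow> nat list \<Rightarrow> nat multiset" where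
  "wmono var w ps = mset (map (\<lambda>m. var (w ! m) (ps ! m) (ps ! Suc m)) [0..<length w])"

text \<open>Coefficient of monomial M in entry (i,j) of the k x k matrix p(X,Y).\<close>
definition entry :: "(bool \<Rightarrow> nat \<Rightarrow> nat \<Rightarrow> nat) \<Rightarrow> nat \<Rightarrow> ncpoly \<Rightarrow> nat \<Rightarrow> nat \<Rightarrow> nat multiset \<Rightarrow> real" where
  "entry var k p i j M =
     (\<Sum>w\<in>nc_support p. p w * of_nat (card {ps\<in>paths k i j (length w). wmono var w ps = M}))"

definition twoletter :: "nat \<Rightarrow> nat multiset \<Rightarrow> bool" where
  "twoletter t M = (\<exists>u v. u \<noteq> v \<and> M = replicate_mset t u + replicate_mset t v)"

definition oneletter :: "nat \<Rightarrow> nat multiset \<Rightarrow> bool" where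
  "oneletter n M = (\<exists>u. M = replicate_mset n u)"

definition diag_vars :: "(bool \<Rightarrow> nat \<Rightarrow> nat \<Rightarrow> nat) \<Rightarrow> nat \<Rightarrow> nat set" where
  "diag_vars var k = {var b i i | b i. i < k}"

definition offdiag_vars :: "(bool \<Rightarrow> nat \<Rightarrow> nat \<Rightarrow> nat) \<Rightarrow> nat \<Rightarrow> nat set" where
  "offdiag_vars var k = {var b i j | b i j. i < k \<and> j < k \<and> i \<noteq> j}"

end

theory Submission
  imports Defs
begin

definition tr :: "bool list \<Rightarrow> nat list \<Rightarrow> (bool \<times> nat \<times> nat) list" where
  "tr w ps = map (\<lambda>m. (w ! m, ps ! m, ps ! Suc m)) [0..<length w]"

definition alt :: "'a \<Rightarrow> 'a \<Rightarrow> nat \<Rightarrow> 'a list" where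
  "alt x y n = map (\<lambda>m. if even m then x else y) [0..<n]"

lemma length_tr[simp]: "length (tr w ps) = length w"
  by (simp add: tr_def)

lemma nth_tr: "m < length w \<Longrightarrow> tr w ps ! m = (w ! m, ps ! m, ps ! Suc m)"
  by (simp add: tr_def)

lemma length_alt[simp]: "length (alt x y n) = n"
  by (simp add: alt_def)

lemma nth_alt: "m < n \<Longrightarrow> alt x y n ! m = (if even m then x else y)"
  by (simp add: alt_def)

lemma mset_alt: "mset (alt x y (2 * t)) = replicate_mset t x + replicate_mset t y"
proof (induction t)
  case 0
  then show ?case by (simp add: alt_def)
next
  case (Suc t)
  have "[0..<2 * Suc t] = [0..<2 * t] @ [2 * t, Suc (2 * t)]"
    by simp  
  then have "alt x y (2 * Suc t) = alt x y (2 * t) @ [x, y]"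
    by (simp add: alt_def)
  then show ?case using Suc by simp
qed

lemma alt_concat: "concat (replicate t [x, y]) = alt x y (2 * t)"
proof (induction t)
  case 0
  then show ?case by (simp add: alt_def)
next
  case (Suc t)
  have "[0..<2 * Suc t] = [0..<2 * t] @ [2 * t, Suc (2 * t)]"
    by simp  
  then have "alt x y (2 * Suc t) = alt x y (2 * t) @ [x, y]"
    by (simp add: alt_def)
  moreover have "concat (replicate (Suc t) [x, y]) = concat (replicate t [x, y]) @ [x, y]"
  proof -
    have "replicate (Suc t) [x, y] = replicate t [x, y] @ [[x, y]]"
      by (simp add: replicate_append_same)
    then show ?thesis by simp
  qed
  ultimately show ?case using Suc by simp
qed

lemma alt_same: "alt x x n = replicate n x"
  by (rule nth_equalityI) (auto simp: nth_alt)

lemma two_elems: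
  assumes "card A \<ge> 2"
  obtains x y where "x \<in> A" "y \<in> A" "x < (y::nat)"
proof -
  have fin: "finite A" using assms by (metis card.infinite not_numeral_le_zero)
  then have "A \<noteq> {}" using assms by auto
  then obtain x where x: "x \<in> A" by auto
  have "card (A - {x}) \<ge> 1" using assms x fin by (simp add: card_Diff_singleton)
  then have "A - {x} \<noteq> {}" by (metis card.empty not_one_le_zero)
  then obtain y where y: "y \<in> A" "y \<noteq> x" by auto
  show ?thesis
  proof (cases "x < y")
    case True then show ?thesis using that x y by blast
  next
    case False then have "y < x" using y by simp
    then show ?thesis using that x y by blast
  qed
qed

lemma no_mixed:
  fixes l :: "('b \<times> 'c \<times> 'c) list"
  assumes chain: "\<And>m. Suc m < length l \<Longrightarrow> snd (snd (l ! m)) = fst (snd (l ! Suc m))"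
    and in12: "\<And>m. m < length l \<Longrightarrow> l ! m = \<tau>1 \<or> l ! m = \<tau>2"
    and cnt: "card {m. m < length l \<and> l ! m = \<tau>2} \<ge> 2"
    and lp1: "fst (snd \<tau>1) = snd (snd \<tau>1)" and nlp2: "fst (snd \<tau>2) \<noteq> snd (snd \<tau>2)"
  shows False
proof -
  obtain lo hi where "lo \<in> {m. m < length l \<and> l ! m = \<tau>2}" "hi \<in> {m. m < length l \<and> l ! m = \<tau>2}" and lh: "lo < hi"
    by (rule two_elems[OF cnt])
  then have lo: "lo < length l" "l ! lo = \<tau>2" and hi: "hi < length l" "l ! hi = \<tau>2" by auto
  have "Suc lo < length l" using lh hi by simp
  then have c1: "snd (snd \<tau>2) = fst (snd (l ! Suc lo))" using chain lo by metis
  have "l ! Suc lo = \<tau>1"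
    using in12[OF \<open>Suc lo < length l\<close>] c1 nlp2 by auto
  with c1 have e1: "snd (snd \<tau>2) = fst (snd \<tau>1)" by simp
  obtain j where j: "hi = Suc j" using lh by (cases hi) auto
  have c2: "snd (snd (l ! j)) = fst (snd \<tau>2)" using chain[of j] j hi by simp
  have "l ! j = \<tau>1" using in12[of j] j hi c2 nlp2 by auto
  with c2 have "snd (snd \<tau>1) = fst (snd \<tau>2)" by simp
  with e1 lp1 nlp2 show False by simp
qed

lemma const_walk:
  assumes "\<And>m. m < n \<Longrightarrow> (ps :: nat list) ! m = ps ! Suc m"
  shows "m \<le> n \<Longrightarrow> ps ! m = ps ! 0"
  using assms by (induction m) auto

lemma alternating:
  fixes l :: "'a list"
  assumes diff: "\<And>m. Suc m < length l \<Longrightarrow> l ! m \<noteq> l ! Suc m"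
    and in12: "\<And>m. m < length l \<Longrightarrow> l ! m = \<tau>1 \<or> l ! m = \<tau>2"
  shows "m < length l \<Longrightarrow> l ! m = (if even m then l ! 0 else (if l ! 0 = \<tau>1 then \<tau>2 else \<tau>1))"
proof (induction m)
  case 0 then show ?case by simp
next
  case (Suc m)
  then have IH: "l ! m = (if even m then l ! 0 else (if l ! 0 = \<tau>1 then \<tau>2 else \<tau>1))" by simp
  have A: "l ! Suc m \<noteq> l ! m" using diff[of m] Suc.prems by auto
  have B: "l ! Suc m = \<tau>1 \<or> l ! Suc m = \<tau>2" using in12 Suc.prems by blast
  have "0 < length l" using Suc.prems by linarith
  then have C: "l ! 0 = \<tau>1 \<or> l ! 0 = \<tau>2" using in12 by blast
  show ?case
  proof (cases "even m")
    case True
    then have "l ! m = l ! 0" using IH by simp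
    then show ?thesis using A B C True by auto
  next
    case False
    then have "l ! m = (if l ! 0 = \<tau>1 then \<tau>2 else \<tau>1)" using IH by simp
    then show ?thesis using A B C False by (cases "l ! 0 = \<tau>1") auto
  qed
qed

lemma struct2:
  fixes w :: "bool list" and ps :: "nat list"
  assumes lw: "length w = 2*t" and lps: "length ps = Suc (2*t)" and t: "t \<ge> 2"
    and T: "mset (tr w ps) = replicate_mset t \<tau>1 + replicate_mset t \<tau>2" and ne: "\<tau>1 \<noteq> \<tau>2"
  shows "(\<exists>b1 b2 a. \<tau>1 = (b1,a,a) \<and> \<tau>2 = (b2,a,a) \<and> (\<forall>m\<le>2*t. ps!m = a))
   \<or> (fst(snd \<tau>1) \<noteq> snd(snd \<tau>1) \<and> snd(snd \<tau>1) = fst(snd \<tau>2) \<and> snd(snd \<tau>2) = fst(snd \<tau>1)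
      \<and> ((\<forall>m<2*t. tr w ps ! m = (if even m then \<tau>1 else \<tau>2)) \<or> (\<forall>m<2*t. tr w ps ! m = (if even m then \<tau>2 else \<tau>1))))"
proof -
  define n where "n = 2 * t"
  define l where "l = tr w ps"
  have ln: "length l = n" using lw by (simp add: l_def n_def)
  have lm: "\<And>m. m < n \<Longrightarrow> l ! m = (w!m, ps!m, ps!Suc m)" using lw by (simp add: l_def n_def nth_tr)
  have setl: "set l \<subseteq> {\<tau>1, \<tau>2}"
  proof -
    have "set l = set_mset (mset l)" by simp
    also have "\<dots> \<subseteq> {\<tau>1, \<tau>2}" using T by (simp add: l_def)
    finally show ?thesis .
  qed
  have in12: "\<And>m. m < length l \<Longrightarrow> l ! m = \<tau>1 \<or> l ! m = \<tau>2"
    using setl nth_mem by blast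
  have cntgen: "card {m. m < length l \<and> l ! m = \<tau>} = count (mset l) \<tau>" for \<tau>
    by (simp add: count_mset count_list_eq_length_filter length_filter_conv_card eq_commute)
  have c1: "card {m. m < length l \<and> l ! m = \<tau>1} = t"
    using cntgen[of \<tau>1] T ne by (simp add: l_def)
  have c2: "card {m. m < length l \<and> l ! m = \<tau>2} = t"
    using cntgen[of \<tau>2] T ne by (simp add: l_def)
  have chain: "\<And>m. Suc m < length l \<Longrightarrow> snd (snd (l ! m)) = fst (snd (l ! Suc m))"
    using lm ln by simp
  have ex1: "\<exists>m. m < length l \<and> l ! m = \<tau>1"
  proof -
    have "{m. m < length l \<and> l ! m = \<tau>1} \<noteq> {}" using c1 t by (metis card.empty not_numeral_le_zero)
    then show ?thesis by auto
  qed
  have ex2: "\<exists>m. m < length l \<and> l ! m = \<tau>2"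
  proof -
    have "{m. m < length l \<and> l ! m = \<tau>2} \<noteq> {}" using c2 t by (metis card.empty not_numeral_le_zero)
    then show ?thesis by auto
  qed
  show ?thesis
  proof (cases "fst (snd \<tau>1) = snd (snd \<tau>1)")
    case lp1: True
    show ?thesis
    proof (cases "fst (snd \<tau>2) = snd (snd \<tau>2)")
      case lp2: True
      have step: "\<And>m. m < n \<Longrightarrow> ps ! m = ps ! Suc m"
      proof -
        fix m assume m: "m < n"
        then have "l ! m = \<tau>1 \<or> l ! m = \<tau>2" using in12 ln by simp
        then show "ps ! m = ps ! Suc m" using lm[OF m] lp1 lp2 by auto
      qed
      have const: "\<And>m. m \<le> n \<Longrightarrow> ps ! m = ps ! 0" using const_walk[OF step] by blast
      obtain m1 where m1: "m1 < n" "l ! m1 = \<tau>1" using ex1 ln by auto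
      obtain m2 where m2: "m2 < n" "l ! m2 = \<tau>2" using ex2 ln by auto
      have "\<tau>1 = (fst \<tau>1, ps ! 0, ps ! 0)" using lm[OF m1(1)] m1 const[of m1] const[of "Suc m1"] by auto
      moreover have "\<tau>2 = (fst \<tau>2, ps ! 0, ps ! 0)" using lm[OF m2(1)] m2 const[of m2] const[of "Suc m2"] by auto
      ultimately show ?thesis using const n_def by blast
    next
      case nlp2: False
      have "False" using no_mixed[OF chain in12 _ lp1 nlp2] c2 t by simp
      then show ?thesis ..
    qed
  next
    case nlp1: False
    show ?thesis
    proof (cases "fst (snd \<tau>2) = snd (snd \<tau>2)")
      case lp2: True
      have in21: "\<And>m. m < length l \<Longrightarrow> l ! m = \<tau>2 \<or> l ! m = \<tau>1" using in12 by blast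
      have "False" using no_mixed[OF chain in21 _ lp2 nlp1] c1 t by simp
      then show ?thesis ..
    next
      case nlp2: False
      have diff: "\<And>m. Suc m < length l \<Longrightarrow> l ! m \<noteq> l ! Suc m"
      proof
        fix m assume m: "Suc m < length l" and eq: "l ! m = l ! Suc m"
        have "snd (snd (l ! m)) = fst (snd (l ! m))" using chain[OF m] eq by simp
        moreover have "l ! m = \<tau>1 \<or> l ! m = \<tau>2" using in12 m by simp
        ultimately show False using nlp1 nlp2 by auto
      qed
      define oth where "oth = (if l ! 0 = \<tau>1 then \<tau>2 else \<tau>1)"
      have alt: "\<And>m. m < length l \<Longrightarrow> l ! m = (if even m then l ! 0 else oth)"
        using alternating[OF diff in12] oth_def by blast
      have n4: "n \<ge> 4" using t n_def by simp
      have l0: "l ! 0 = \<tau>1 \<or> l ! 0 = \<tau>2" using in12 ln n4 by simp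
      have ch0: "snd (snd (l ! 0)) = fst (snd oth)" using chain[of 0] alt[of 1] ln n4 by simp
      have ch1: "snd (snd oth) = fst (snd (l ! 0))" using chain[of "Suc 0"] alt[of "Suc 0"] alt[of "Suc (Suc 0)"] ln n4 by simp
      have E: "snd(snd \<tau>1) = fst(snd \<tau>2) \<and> snd(snd \<tau>2) = fst(snd \<tau>1)"
        using l0 ch0 ch1 ne unfolding oth_def by (auto split: if_splits)
      have "(\<forall>m<n. l ! m = (if even m then \<tau>1 else \<tau>2)) \<or> (\<forall>m<n. l ! m = (if even m then \<tau>2 else \<tau>1))"
      proof (cases "l ! 0 = \<tau>1")
        case True
        then have "oth = \<tau>2" by (simp add: oth_def)
        then have "\<forall>m<n. l ! m = (if even m then \<tau>1 else \<tau>2)"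
          using alt ln True by metis
        then show ?thesis ..
      next
        case False
        then have "l ! 0 = \<tau>2" "oth = \<tau>1" using l0 by (auto simp add: oth_def)
        then have "\<forall>m<n. l ! m = (if even m then \<tau>2 else \<tau>1)"
          using alt ln by metis
        then show ?thesis ..
      qed
      then show ?thesis using E nlp1 by (simp add: l_def n_def)
    qed
  qed
qed

lemma tr_alt: "tr (alt b1 b2 n) (alt a c (Suc n)) = alt (b1, a, c) (b2, c, a) n"
  by (rule nth_equalityI) (auto simp: nth_tr nth_alt)

lemma tr_rep: "tr w (replicate (Suc (length w)) a) = map (\<lambda>b. (b, a, a)) w"
  by (rule nth_equalityI) (auto simp: nth_tr nth_Cons split: nat.splits)

lemma alt_in_paths:
  assumes "even n" "a < k" "c < k"
  shows "alt a c (Suc n) \<in> paths k a a n"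
proof -
  have "hd (alt a c (Suc n)) = alt a c (Suc n) ! 0"
    by (rule hd_conv_nth) (metis length_alt Zero_not_Suc list.size(3))
  moreover have "last (alt a c (Suc n)) = alt a c (Suc n) ! n"
    by (subst last_conv_nth) (metis length_alt Zero_not_Suc list.size(3), simp)
  moreover have "set (alt a c (Suc n)) \<subseteq> {..<k}" using assms by (auto simp: alt_def)
  ultimately show ?thesis using assms by (simp add: paths_def nth_alt)
qed

lemma rep_in_paths:
  assumes "a < k"
  shows "replicate (Suc n) a \<in> paths k a a n"
  using assms by (simp add: paths_def)

lemma from_alt:
  assumes lw: "length w = n" and lps: "length ps = Suc n" and ev: "even n" and n0: "n > 0"
    and A: "\<forall>m<n. tr w ps ! m = (if even m then (b1, a, c) else (b2, c, a))"
  shows "w = alt b1 b2 n \<and> ps = alt a c (Suc n)"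
proof
  show "w = alt b1 b2 n"
  proof (rule nth_equalityI)
    show "length w = length (alt b1 b2 n)" using lw by simp
    fix m assume "m < length w"
    then show "w ! m = alt b1 b2 n ! m" using A lw by (auto simp: nth_tr nth_alt split: if_splits)
  qed
  show "ps = alt a c (Suc n)"
  proof (rule nth_equalityI)
    show "length ps = length (alt a c (Suc n))" using lps by simp
    fix m assume m: "m < length ps"
    show "ps ! m = alt a c (Suc n) ! m"
    proof (cases "m < n")
      case True
      then show ?thesis using A[rule_format, OF True] lw by (auto simp: nth_tr nth_alt split: if_splits)
    next
      case False
      then have mn: "m = n" using m lps by simp
      obtain j where j: "n = Suc j" using n0 by (cases n) auto
      have "odd j" using ev j by simp
      then have "tr w ps ! j = (b2, c, a)" using A j by auto
      then have "ps ! n = a" using j lw by (simp add: nth_tr)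
      then show ?thesis using mn ev by (simp add: nth_alt)
    qed
  qed
qed

locale L28 =
  fixes k t :: nat and var :: "bool \<Rightarrow> nat \<Rightarrow> nat \<Rightarrow> nat" and p :: ncpoly
  assumes vars: "bij_betw (\<lambda>(b, i, j). var b i j) (UNIV \<times> {..<k} \<times> {..<k}) {1..2 * k^2}"
    and fin: "finite (nc_support p)"
    and t2: "t \<ge> 2"
begin

definition V :: "bool \<times> nat \<times> nat \<Rightarrow> nat" where "V = (\<lambda>(b, i, j). var b i j)"
definition D :: "(bool \<times> nat \<times> nat) set" where "D = UNIV \<times> {..<k} \<times> {..<k}"

definition val :: "nat \<Rightarrow> nat \<Rightarrow> (bool \<times> nat \<times> nat) multiset \<Rightarrow> real" where
  "val i j T = (\<Sum>w\<in>nc_support p. p w * of_nat (card {ps\<in>paths k i j (length w). mset (tr w ps) = T}))"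

lemma injV: "inj_on V D"
  using vars unfolding V_def D_def bij_betw_def by blast

lemma V_simp[simp]: "V (b, i, j) = var b i j" by (simp add: V_def)

lemma var_inj: "i < k \<Longrightarrow> j < k \<Longrightarrow> i' < k \<Longrightarrow> j' < k \<Longrightarrow> var b i j = var b' i' j' \<longleftrightarrow> (b, i, j) = (b', i', j')"
  using injV unfolding inj_on_def D_def by (metis V_simp UNIV_I lessThan_iff mem_Sigma_iff)

lemma set_tr_D: "ps \<in> paths k i j (length w) \<Longrightarrow> set (tr w ps) \<subseteq> D"
proof
  fix x assume ps: "ps \<in> paths k i j (length w)" and x: "x \<in> set (tr w ps)"
  then obtain m where m: "m < length w" "x = tr w ps ! m" by (metis in_set_conv_nth length_tr)
  have "ps ! m \<in> set ps" "ps ! Suc m \<in> set ps" using ps m by (auto simp: paths_def)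
  then have "ps ! m < k" "ps ! Suc m < k" using ps by (auto simp: paths_def)
  then show "x \<in> D" using m by (auto simp: D_def nth_tr)
qed

lemma wmono_V: "wmono var w ps = image_mset V (mset (tr w ps))"
  by (simp add: wmono_def tr_def mset_map multiset.map_comp o_def)

lemma img_inj:
  assumes "set_mset A \<subseteq> D" "set_mset B \<subseteq> D"
  shows "image_mset V A = image_mset V B \<longleftrightarrow> A = B"
proof
  assume eq: "image_mset V A = image_mset V B"
  have "\<And>X. set_mset X \<subseteq> D \<Longrightarrow> image_mset (inv_into D V) (image_mset V X) = X"
  proof -
    fix X :: "(bool \<times> nat \<times> nat) multiset" assume X: "set_mset X \<subseteq> D"
    have "image_mset (inv_into D V) (image_mset V X) = image_mset (inv_into D V \<circ> V) X"
      by (simp add: multiset.map_comp)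
    also have "\<dots> = image_mset id X"
      by (rule image_mset_cong) (use X injV in \<open>auto intro: inv_into_f_f\<close>)
    finally show "image_mset (inv_into D V) (image_mset V X) = X" by simp
  qed
  then show "A = B" using assms eq by metis
qed simp

lemma entry_val:
  assumes "set_mset T \<subseteq> D"
  shows "entry var k p i j (image_mset V T) = val i j T"
  unfolding entry_def val_def
proof (rule sum.cong[OF refl])
  fix w
  have "{ps \<in> paths k i j (length w). wmono var w ps = image_mset V T} = {ps \<in> paths k i j (length w). mset (tr w ps) = T}"
    using set_tr_D img_inj[OF _ assms] by (auto simp: wmono_V)
  then show "p w * of_nat (card {ps \<in> paths k i j (length w). wmono var w ps = image_mset V T}) =
        p w * of_nat (card {ps \<in> paths k i j (length w). mset (tr w ps) = T})" by simp
qed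

lemma entry_notin:
  assumes "u \<in># M" "u \<notin> V ` D"
  shows "entry var k p i j M = 0"
  unfolding entry_def
proof (rule sum.neutral, rule ballI)
  fix w
  have "{ps \<in> paths k i j (length w). wmono var w ps = M} = {}"
  proof (rule ccontr)
    assume "{ps \<in> paths k i j (length w). wmono var w ps = M} \<noteq> {}"
    then obtain ps where ps: "ps \<in> paths k i j (length w)" "wmono var w ps = M" by auto
    then have "u \<in># image_mset V (mset (tr w ps))" using assms(1) by (simp add: wmono_V)
    then have "u \<in> V ` set (tr w ps)" by simp
    then show False using set_tr_D[OF ps(1)] assms(2) by auto
  qed
  then show "p w * of_nat (card {ps \<in> paths k i j (length w). wmono var w ps = M}) = 0"
    by (simp only: card.empty)
qed

lemma sum_delta_p:
  "(\<Sum>w\<in>nc_support p. p w * (if w = w0 then 1 else 0)) = p w0"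
proof -
  have "(\<Sum>w\<in>nc_support p. p w * (if w = w0 then 1 else 0)) = (\<Sum>w\<in>nc_support p. if w = w0 then p w else 0)"
    by (rule sum.cong) auto
  also have "\<dots> = (if w0 \<in> nc_support p then p w0 else 0)" using fin by (rule sum.delta)
  also have "\<dots> = p w0" by (simp add: nc_support_def)
  finally show ?thesis .
qed

end


context L28 begin

lemma len_from_T: "mset (tr w ps) = T \<Longrightarrow> length w = size T"
  by (metis length_tr size_mset)

lemma paths_same: "ps \<in> paths k i j n \<Longrightarrow> ps \<in> paths k a a n \<Longrightarrow> i = a \<and> j = a"
  unfolding paths_def by auto

lemma val_single:
  assumes "\<And>w. {ps \<in> paths k i j (length w). mset (tr w ps) = T} = (if w = w0 then {x} else {})"
  shows "val i j T = p w0"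
proof -
  have "val i j T = (\<Sum>w\<in>nc_support p. p w * (if w = w0 then 1 else 0))"
    unfolding val_def by (rule sum.cong[OF refl]) (simp add: assms)
  then show ?thesis by (simp add: sum_delta_p)
qed

lemma val_empty:
  assumes "\<And>w. {ps \<in> paths k i j (length w). mset (tr w ps) = T} = {}"
  shows "val i j T = 0"
  unfolding val_def by (simp add: assms)

lemma val_filter:
  assumes "\<And>w. {ps \<in> paths k i j (length w). mset (tr w ps) = T} = (if Q w then {f w} else {})"
  shows "val i j T = (\<Sum>w\<in>nc_support p. if Q w then p w else 0)"
  unfolding val_def by (rule sum.cong[OF refl]) (simp add: assms)

lemma setC:
  assumes ac: "a \<noteq> c" "a < k" "c < k"
  shows "{ps \<in> paths k i j (length w). mset (tr w ps) = replicate_mset t (b1,a,c) + replicate_mset t (b2,c,a)}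
    = (if i = a \<and> j = a then (if w = alt b1 b2 (2*t) then {alt a c (Suc (2*t))} else {})
       else if i = c \<and> j = c then (if w = alt b2 b1 (2*t) then {alt c a (Suc (2*t))} else {}) else {})"
    (is "?S = ?R")
proof (rule set_eqI, rule iffI)
  fix ps assume "ps \<in> ?S"
  then have ps: "ps \<in> paths k i j (length w)"
    and T: "mset (tr w ps) = replicate_mset t (b1,a,c) + replicate_mset t (b2,c,a)" by auto
  have lw: "length w = 2 * t" using len_from_T[OF T] by simp
  have lps: "length ps = Suc (2 * t)" using ps lw by (simp add: paths_def)
  have ne: "(b1,a,c) \<noteq> (b2,c,a)" using ac by simp
  have ev: "even (2 * t)" and n0: "2 * t > 0" using t2 by auto
  from struct2[OF lw lps t2 T ne] ac
  have "(\<forall>m<2*t. tr w ps ! m = (if even m then (b1,a,c) else (b2,c,a))) \<or>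
        (\<forall>m<2*t. tr w ps ! m = (if even m then (b2,c,a) else (b1,a,c)))" by auto
  then show "ps \<in> ?R"
  proof
    assume A: "\<forall>m<2*t. tr w ps ! m = (if even m then (b1,a,c) else (b2,c,a))"
    from from_alt[OF lw lps ev n0 A] have w: "w = alt b1 b2 (2 * t)" and p: "ps = alt a c (Suc (2 * t))" by auto
    have "ps \<in> paths k a a (2 * t)" using p alt_in_paths[OF ev ac(2,3)] by simp
    then have "i = a \<and> j = a" using paths_same ps lw by simp
    then show "ps \<in> ?R" using w p by simp
  next
    assume A: "\<forall>m<2*t. tr w ps ! m = (if even m then (b2,c,a) else (b1,a,c))"
    from from_alt[OF lw lps ev n0 A] have w: "w = alt b2 b1 (2 * t)" and p: "ps = alt c a (Suc (2 * t))" by auto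
    have "ps \<in> paths k c c (2 * t)" using p alt_in_paths[OF ev ac(3,2)] by simp
    then have "i = c \<and> j = c" using paths_same ps lw by simp
    then show "ps \<in> ?R" using w p ac by simp
  qed
next
  fix ps assume R: "ps \<in> ?R"
  have ev: "even (2 * t)" by simp
  show "ps \<in> ?S"
  proof (cases "i = a \<and> j = a \<and> w = alt b1 b2 (2*t)")
    case True
    then have p: "ps = alt a c (Suc (2 * t))" using R by (simp split: if_splits)
    have "mset (tr w ps) = replicate_mset t (b1,a,c) + replicate_mset t (b2,c,a)"
      using True p by (simp add: tr_alt mset_alt)
    then show ?thesis using True p alt_in_paths[OF ev ac(2,3)] by simp
  next
    case False
    then have C: "i = c \<and> j = c \<and> w = alt b2 b1 (2*t)" and p: "ps = alt c a (Suc (2 * t))" using R ac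
      by (auto split: if_splits)
    have "mset (tr w ps) = replicate_mset t (b1,a,c) + replicate_mset t (b2,c,a)"
      using C p by (simp add: tr_alt mset_alt add.commute)
    then show ?thesis using C p alt_in_paths[OF ev ac(3,2)] by simp
  qed
qed

lemma valC:
  assumes ac: "a \<noteq> c" "a < k" "c < k"
  shows "val i j (replicate_mset t (b1,a,c) + replicate_mset t (b2,c,a))
    = (if i = a \<and> j = a then p (alt b1 b2 (2*t)) else if i = c \<and> j = c then p (alt b2 b1 (2*t)) else 0)"
proof (cases "i = a \<and> j = a")
  case True
  then show ?thesis using val_single[of i j _ "alt b1 b2 (2*t)"] setC[OF ac] by simp
next
  case F1: False
  show ?thesis
  proof (cases "i = c \<and> j = c")
    case True
    have "val i j (replicate_mset t (b1,a,c) + replicate_mset t (b2,c,a)) = p (alt b2 b1 (2*t))"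
      by (rule val_single) (simp only: setC[OF ac] if_not_P[OF F1] if_P[OF True])
    then show ?thesis using F1 True by simp
  next
    case False
    have "val i j (replicate_mset t (b1,a,c) + replicate_mset t (b2,c,a)) = 0"
      by (rule val_empty) (simp only: setC[OF ac] if_not_P[OF F1] if_not_P[OF False])
    then show ?thesis by (simp only: if_not_P[OF F1] if_not_P[OF False])
  qed
qed

lemma setA:
  assumes b: "b1 \<noteq> b2" and a: "a < k"
  shows "{ps \<in> paths k i j (length w). mset (tr w ps) = replicate_mset t (b1,a,a) + replicate_mset t (b2,a,a)}
    = (if i = a \<and> j = a then (if count_list w False = t \<and> count_list w True = t then {replicate (Suc (length w)) a} else {}) else {})"
    (is "?S = ?R")
proof (rule set_eqI, rule iffI)
  fix ps assume "ps \<in> ?S"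
  then have ps: "ps \<in> paths k i j (length w)"
    and T: "mset (tr w ps) = replicate_mset t (b1,a,a) + replicate_mset t (b2,a,a)" by auto
  have lw: "length w = 2 * t" using len_from_T[OF T] by simp
  have lps: "length ps = Suc (2 * t)" using ps lw by (simp add: paths_def)
  have ne: "(b1,a,a) \<noteq> (b2,a,a)" using b by simp
  from struct2[OF lw lps t2 T ne] have C: "\<forall>m\<le>2*t. ps ! m = a" by auto
  have p: "ps = replicate (Suc (length w)) a"
  proof (rule replicate_eqI)
    show "length ps = Suc (length w)" using lps lw by simp
    fix y assume "y \<in> set ps"
    then obtain m where "m < length ps" "y = ps ! m" by (metis in_set_conv_nth)
    then show "y = a" using C lps by simp
  qed
  have "ps \<in> paths k a a (length w)" using p rep_in_paths[OF a] by simp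
  then have ij: "i = a \<and> j = a" using paths_same ps by blast
  have trp: "tr w ps = map (\<lambda>b. (b, a, a)) w" using p tr_rep[of w a] by simp
  have "image_mset fst (mset (tr w ps)) = mset w"
    by (simp add: trp mset_map multiset.map_comp o_def)
  then have mw: "mset w = replicate_mset t b1 + replicate_mset t b2" using T by simp
  have "count_list w False = t \<and> count_list w True = t"
    using b by (cases b1; cases b2) (simp_all add: count_mset[symmetric] mw)
  then show "ps \<in> ?R" using ij p by simp
next
  fix ps assume R: "ps \<in> ?R"
  then have C: "i = a \<and> j = a \<and> count_list w False = t \<and> count_list w True = t"
    and p: "ps = replicate (Suc (length w)) a" by (auto split: if_splits)
  have mw: "mset w = replicate_mset t False + replicate_mset t True"
  proof (rule multiset_eqI)
    fix x show "count (mset w) x = count (replicate_mset t False + replicate_mset t True) x"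
      using C by (cases x) (simp_all add: count_mset)
  qed
  have trp: "tr w ps = map (\<lambda>b. (b, a, a)) w" using p tr_rep[of w a] by simp
  have "mset (tr w ps) = image_mset (\<lambda>b. (b, a, a)) (mset w)"
    by (simp add: trp mset_map)
  also have "\<dots> = replicate_mset t (b1,a,a) + replicate_mset t (b2,a,a)"
    using b by (cases b1; cases b2) (simp_all add: mw add.commute)
  finally show "ps \<in> ?S" using C p rep_in_paths[OF a] by simp
qed

lemma valA:
  assumes b: "b1 \<noteq> b2" and a: "a < k"
  shows "val i j (replicate_mset t (b1,a,a) + replicate_mset t (b2,a,a)) = (if i = a \<and> j = a then phi p t t else 0)"
proof (cases "i = a \<and> j = a")
  case True
  have "val i j (replicate_mset t (b1,a,a) + replicate_mset t (b2,a,a))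
     = (\<Sum>w\<in>nc_support p. if count_list w False = t \<and> count_list w True = t then p w else 0)"
    by (rule val_filter) (use setA[OF b a] True in simp)
  also have "\<dots> = phi p t t"
    unfolding phi_def using sum.inter_filter[OF fin, of p "\<lambda>w. count_list w False = t \<and> count_list w True = t"]
    by simp
  finally show ?thesis using True by simp
next
  case False
  have "val i j (replicate_mset t (b1,a,a) + replicate_mset t (b2,a,a)) = 0"
    by (rule val_empty) (simp only: setA[OF b a] if_not_P[OF False])
  then show ?thesis by (simp only: if_not_P[OF False])
qed

lemma set1:
  assumes a: "a < k"
  shows "{ps \<in> paths k i j (length w). mset (tr w ps) = replicate_mset (2*t) (b,a,c)}
    = (if a = c \<and> i = a \<and> j = a then (if w = replicate (2*t) b then {replicate (Suc (2*t)) a} else {}) else {})"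
    (is "?S = ?R")
proof (rule set_eqI, rule iffI)
  fix ps assume "ps \<in> ?S"
  then have ps: "ps \<in> paths k i j (length w)"
    and T: "mset (tr w ps) = replicate_mset (2*t) (b,a,c)" by auto
  have lw: "length w = 2 * t" using len_from_T[OF T] by simp
  have lps: "length ps = Suc (2 * t)" using ps lw by (simp add: paths_def)
  have all: "\<And>m. m < 2*t \<Longrightarrow> tr w ps ! m = (b,a,c)"
  proof -
    fix m assume m: "m < 2*t"
    have "tr w ps ! m \<in> set (tr w ps)" using m lw by simp
    also have "set (tr w ps) = set_mset (mset (tr w ps))" by simp
    finally show "tr w ps ! m = (b,a,c)" using T by (simp split: if_splits)
  qed
  have E: "\<And>m. m < 2*t \<Longrightarrow> w ! m = b \<and> ps ! m = a \<and> ps ! Suc m = c"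
    using all lw by (simp add: nth_tr)
  have "ps ! 1 = c" using E[of 0] t2 by simp
  moreover have "ps ! 1 = a" using E[of 1] t2 by simp
  ultimately have ac: "a = c" by simp
  have p: "ps = replicate (Suc (2*t)) a"
  proof (rule replicate_eqI)
    show "length ps = Suc (2*t)" using lps by simp
    fix y assume "y \<in> set ps"
    then obtain m where m: "m < length ps" "y = ps ! m" by (metis in_set_conv_nth)
    show "y = a"
    proof (cases "m < 2*t")
      case True then show ?thesis using E m by simp
    next
      case False
      then have "m = Suc (2*t - 1)" using m lps t2 by simp
      then show ?thesis using E[of "2*t - 1"] ac t2 m by simp
    qed
  qed
  have w: "w = replicate (2*t) b" by (rule nth_equalityI) (use E lw in auto)
  have "ps \<in> paths k a a (length w)" using p lw rep_in_paths[OF a] by simp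
  then have ij: "i = a \<and> j = a" using paths_same ps by blast
  show "ps \<in> ?R" using ij p w ac by simp
next
  fix ps assume R: "ps \<in> ?R"
  then have C: "a = c \<and> i = a \<and> j = a \<and> w = replicate (2*t) b"
    and p: "ps = replicate (Suc (2*t)) a" by (auto split: if_splits)
  have "tr w ps = map (\<lambda>b. (b, a, a)) w" using tr_rep[of w a] C p by simp
  then have "mset (tr w ps) = replicate_mset (2*t) (b,a,c)" using C by (simp add: mset_map)
  then show "ps \<in> ?S" using C p rep_in_paths[OF a] by simp
qed

lemma val1:
  assumes a: "a < k"
  shows "val i j (replicate_mset (2*t) (b,a,c)) = (if a = c \<and> i = a \<and> j = a then p (replicate (2*t) b) else 0)"
proof (cases "a = c \<and> i = a \<and> j = a")
  case True
  then show ?thesis using val_single[of i j _ "replicate (2*t) b"] set1[OF a] by simp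
next
  case False
  have "val i j (replicate_mset (2*t) (b,a,c)) = 0"
    by (rule val_empty) (simp only: set1[OF a] if_not_P[OF False])
  then show ?thesis by (simp only: if_not_P[OF False])
qed

end


context L28 begin

definition MT :: "bool \<Rightarrow> bool \<Rightarrow> nat \<Rightarrow> nat \<Rightarrow> nat multiset" where
  "MT b1 b2 a c = image_mset V (replicate_mset t (b1,a,c) + replicate_mset t (b2,c,a))"

definition O1 :: "bool \<Rightarrow> nat \<Rightarrow> nat multiset" where
  "O1 b a = replicate_mset (2*t) (var b a a)"

lemma val_nonzero_ex:
  assumes "val i j T \<noteq> 0"
  shows "\<exists>w ps. ps \<in> paths k i j (length w) \<and> mset (tr w ps) = T"
proof (rule ccontr)
  assume "\<not> ?thesis"
  then have "\<And>w. {ps \<in> paths k i j (length w). mset (tr w ps) = T} = {}" by auto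
  then have "val i j T = 0" by (rule val_empty)
  with assms show False by simp
qed

lemma classify2:
  assumes ne: "\<tau>1 \<noteq> \<tau>2" and D1: "\<tau>1 \<in> D" and D2: "\<tau>2 \<in> D"
  shows "(\<exists>b1 b2 a c. a < k \<and> c < k \<and> a \<noteq> c \<and> \<tau>1 = (b1,a,c) \<and> \<tau>2 = (b2,c,a))
    \<or> (\<exists>a<k. replicate_mset t \<tau>1 + replicate_mset t \<tau>2 = replicate_mset t (False,a,a) + replicate_mset t (True,a,a))
    \<or> (\<forall>i j. val i j (replicate_mset t \<tau>1 + replicate_mset t \<tau>2) = 0)"
proof (rule ccontr)
  assume N: "\<not> ?thesis"
  then obtain i j where "val i j (replicate_mset t \<tau>1 + replicate_mset t \<tau>2) \<noteq> 0" by auto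
  then obtain w ps where ps: "ps \<in> paths k i j (length w)"
    and T: "mset (tr w ps) = replicate_mset t \<tau>1 + replicate_mset t \<tau>2"
    using val_nonzero_ex by blast
  have lw: "length w = 2 * t" using len_from_T[OF T] by simp
  have lps: "length ps = Suc (2 * t)" using ps lw by (simp add: paths_def)
  from struct2[OF lw lps t2 T ne] show False
  proof
    assume "\<exists>b1 b2 a. \<tau>1 = (b1, a, a) \<and> \<tau>2 = (b2, a, a) \<and> (\<forall>m\<le>2 * t. ps ! m = a)"
    then obtain b1 b2 a where e: "\<tau>1 = (b1, a, a)" "\<tau>2 = (b2, a, a)" by blast
    have a: "a < k" using D1 e by (simp add: D_def)
    have "b1 \<noteq> b2" using ne e by simp
    then have "replicate_mset t \<tau>1 + replicate_mset t \<tau>2 = replicate_mset t (False,a,a) + replicate_mset t (True,a,a)"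
      using e by (cases b1; cases b2) (simp_all add: add.commute)
    then show False using N a by blast
  next
    assume A: "fst (snd \<tau>1) \<noteq> snd (snd \<tau>1) \<and> snd (snd \<tau>1) = fst (snd \<tau>2) \<and> snd (snd \<tau>2) = fst (snd \<tau>1) \<and> ((\<forall>m<2*t. tr w ps ! m = (if even m then \<tau>1 else \<tau>2)) \<or> (\<forall>m<2*t. tr w ps ! m = (if even m then \<tau>2 else \<tau>1)))"
    obtain b1 a c where e1: "\<tau>1 = (b1, a, c)" by (cases \<tau>1) auto
    obtain b2 a2 c2 where e2: "\<tau>2 = (b2, a2, c2)" by (cases \<tau>2) auto
    have "a \<noteq> c" "a2 = c" "c2 = a" using A e1 e2 by auto
    moreover have "a < k" "c < k" using D1 e1 by (auto simp: D_def)
    ultimately show False using N e1 e2 by blast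
  qed
qed

lemma entry_MT:
  assumes "a \<noteq> c" "a < k" "c < k"
  shows "entry var k p i j (MT b1 b2 a c) = (if i = a \<and> j = a then p (alt b1 b2 (2*t)) else if i = c \<and> j = c then p (alt b2 b1 (2*t)) else 0)"
proof -
  have "set_mset (replicate_mset t (b1,a,c) + replicate_mset t (b2,c,a)) \<subseteq> D" using assms by (auto simp: D_def)
  then have "entry var k p i j (image_mset V (replicate_mset t (b1,a,c) + replicate_mset t (b2,c,a)))
     = val i j (replicate_mset t (b1,a,c) + replicate_mset t (b2,c,a))" by (rule entry_val)
  then show ?thesis unfolding MT_def by (simp only: valC[OF assms])
qed

lemma entry_MTA:
  assumes "a < k"
  shows "entry var k p i j (MT False True a a) = (if i = a \<and> j = a then phi p t t else 0)"
proof -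
  have "set_mset (replicate_mset t (False,a,a) + replicate_mset t (True,a,a)) \<subseteq> D" using assms by (auto simp: D_def)
  then have "entry var k p i j (image_mset V (replicate_mset t (False,a,a) + replicate_mset t (True,a,a)))
     = val i j (replicate_mset t (False,a,a) + replicate_mset t (True,a,a))" by (rule entry_val)
  then show ?thesis unfolding MT_def by (simp only: valA[of False True a i j, OF _ assms] simp_thms)
qed

lemma O1_img: "O1 b a = image_mset V (replicate_mset (2*t) (b,a,a))"
  by (simp add: O1_def)

lemma entry_O1:
  assumes "a < k"
  shows "entry var k p i j (O1 b a) = (if i = a \<and> j = a then p (replicate (2*t) b) else 0)"
proof -
  have "set_mset (replicate_mset (2*t) (b,a,a)) \<subseteq> D" using assms by (auto simp: D_def)
  then have "entry var k p i j (image_mset V (replicate_mset (2*t) (b,a,a)))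
     = val i j (replicate_mset (2*t) (b,a,a))" by (rule entry_val)
  then show ?thesis unfolding O1_img by (simp only: val1[OF assms] simp_thms)
qed

lemma twoletter_cases:
  assumes "twoletter t M"
  shows "(\<forall>i j. entry var k p i j M = 0) \<or> (\<exists>b1 b2 a c. a < k \<and> c < k \<and> a \<noteq> c \<and> M = MT b1 b2 a c)
    \<or> (\<exists>a<k. M = MT False True a a)"
proof -
  obtain u v where uv: "u \<noteq> v" "M = replicate_mset t u + replicate_mset t v"
    using assms by (auto simp: twoletter_def)
  have um: "u \<in># M" and vm: "v \<in># M" using uv t2 by auto
  show ?thesis
  proof (cases "u \<in> V ` D \<and> v \<in> V ` D")
    case False
    then have "u \<notin> V ` D \<or> v \<notin> V ` D" by blast
    then have "\<forall>i j. entry var k p i j M = 0"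
    proof
      assume "u \<notin> V ` D" then show ?thesis using entry_notin[OF um] by blast
    next
      assume "v \<notin> V ` D" then show ?thesis using entry_notin[OF vm] by blast
    qed
    then show ?thesis by blast
  next
    case True
    then obtain \<tau>1 \<tau>2 where t1: "\<tau>1 \<in> D" "u = V \<tau>1" and t2': "\<tau>2 \<in> D" "v = V \<tau>2" by blast
    have ne: "\<tau>1 \<noteq> \<tau>2" using uv t1 t2' by auto
    have M: "M = image_mset V (replicate_mset t \<tau>1 + replicate_mset t \<tau>2)" using uv t1 t2' by simp
    have sD: "set_mset (replicate_mset t \<tau>1 + replicate_mset t \<tau>2) \<subseteq> D" using t1 t2' by auto
    from classify2[OF ne t1(1) t2'(1)] show ?thesis
    proof (elim disjE)
      assume "\<exists>b1 b2 a c. a < k \<and> c < k \<and> a \<noteq> c \<and> \<tau>1 = (b1,a,c) \<and> \<tau>2 = (b2,c,a)"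
      then obtain b1 b2 a c where abc: "a < k" "c < k" "a \<noteq> c" "\<tau>1 = (b1,a,c)" "\<tau>2 = (b2,c,a)" by blast
      then have "M = MT b1 b2 a c" unfolding MT_def M by simp
      then show ?thesis using abc by blast
    next
      assume "\<exists>a<k. replicate_mset t \<tau>1 + replicate_mset t \<tau>2 = replicate_mset t (False,a,a) + replicate_mset t (True,a,a)"
      then obtain a where a: "a < k" "replicate_mset t \<tau>1 + replicate_mset t \<tau>2 = replicate_mset t (False,a,a) + replicate_mset t (True,a,a)" by blast
      then have "M = MT False True a a" unfolding MT_def M by simp
      then show ?thesis using a by blast
    next
      assume "\<forall>i j. val i j (replicate_mset t \<tau>1 + replicate_mset t \<tau>2) = 0"
      then have "\<forall>i j. entry var k p i j M = 0" unfolding M using entry_val[OF sD] by simp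
      then show ?thesis by blast
    qed
  qed
qed

lemma oneletter_cases:
  assumes "oneletter (2*t) M"
  shows "(\<forall>i j. entry var k p i j M = 0) \<or> (\<exists>b a. a < k \<and> M = O1 b a)"
proof -
  obtain u where u: "M = replicate_mset (2*t) u" using assms by (auto simp: oneletter_def)
  have um: "u \<in># M" using u t2 by auto
  show ?thesis
  proof (cases "u \<in> V ` D")
    case False
    then have "\<forall>i j. entry var k p i j M = 0" using entry_notin[OF um] by blast
    then show ?thesis by blast
  next
    case True
    then obtain b a c where D1: "(b,a,c) \<in> D" and uv: "u = V (b,a,c)" by auto
    have a: "a < k" using D1 by (simp add: D_def)
    have M: "M = image_mset V (replicate_mset (2*t) (b,a,c))" using u uv by simp
    have sD: "set_mset (replicate_mset (2*t) (b,a,c)) \<subseteq> D" using D1 by auto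
    show ?thesis
    proof (cases "a = c")
      case True
      then have "M = O1 b a" using M O1_img by simp
      then show ?thesis using a by blast
    next
      case False
      then have "\<forall>i j. entry var k p i j M = 0" unfolding M using entry_val[OF sD] val1[OF a] by simp
      then show ?thesis by blast
    qed
  qed
qed

end


lemma card_bool2: "card {x::bool\<times>bool. P x} = (if P (False,False) then 1 else 0) + (if P (False,True) then 1 else 0)
    + (if P (True,False) then 1 else 0) + (if P (True,True) then 1 else 0)"
proof -
  have U: "(UNIV::(bool\<times>bool) set) = {(False,False),(False,True),(True,False),(True,True)}" by auto
  have "card {x::bool\<times>bool. P x} = (\<Sum>x\<in>{x\<in>UNIV. P x}. 1)" by simp
  also have "\<dots> = (\<Sum>x\<in>UNIV. if P x then 1 else 0)" by (rule sum.inter_filter) simp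
  also have "\<dots> = (if P (False,False) then 1 else 0) + (if P (False,True) then 1 else 0)
    + (if P (True,False) then 1 else 0) + (if P (True,True) then 1 else 0)"
    unfolding U by simp
  finally show ?thesis .
qed

lemma card_bool1: "card {x::bool. P x} = (if P False then 1 else 0) + (if P True then 1 else 0)"
proof -
  have U: "(UNIV::bool set) = {False, True}" by auto
  have "card {x::bool. P x} = (\<Sum>x\<in>{x\<in>UNIV. P x}. 1)" by simp
  also have "\<dots> = (\<Sum>x\<in>UNIV. if P x then 1 else 0)" by (rule sum.inter_filter) simp
  also have "\<dots> = (if P False then 1 else 0) + (if P True then 1 else 0)"
    unfolding U by simp
  finally show ?thesis .
qed

lemma card_off: "card {(a, c). a < k \<and> c < (k::nat) \<and> a \<noteq> c} = k^2 - k"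
proof -
  have E: "{(a, c). a < k \<and> c < k \<and> a \<noteq> c} = {..<k} \<times> {..<k} - (\<lambda>a. (a, a)) ` {..<k}" by auto
  have "card ((\<lambda>a. (a, a)) ` {..<k}) = k" by (subst card_image) (auto simp: inj_on_def)
  moreover have "(\<lambda>a. (a, a)) ` {..<k} \<subseteq> {..<k} \<times> {..<k}" by auto
  ultimately show ?thesis unfolding E by (simp add: card_Diff_subset power2_eq_square)
qed

context L28 begin

lemma MT_expand: "MT b1 b2 a c = replicate_mset t (var b1 a c) + replicate_mset t (var b2 c a)"
  by (simp add: MT_def)

lemma set_MT: "set_mset (MT b1 b2 a c) = {var b1 a c, var b2 c a}"
  using t2 by (auto simp: MT_expand)

lemma MT_swap: "MT b1 b2 a c = MT b2 b1 c a"
  by (simp add: MT_def add.commute)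

lemma twoletter_MT:
  assumes "a < k" "c < k" "a \<noteq> c \<or> b1 \<noteq> b2"
  shows "twoletter t (MT b1 b2 a c)"
proof -
  have "var b1 a c \<noteq> var b2 c a" using assms var_inj by auto
  then show ?thesis unfolding twoletter_def MT_expand by blast
qed

lemma MT_eq:
  assumes ac: "a \<noteq> c" "a \<noteq> c'" "a < k" "c < k" "c' < k" and eq: "MT b1 b2 a c = MT b1' b2' a c'"
  shows "b1 = b1' \<and> b2 = b2' \<and> c = c'"
proof -
  have "var b1 a c \<in># MT b1 b2 a c" by (simp only: set_MT) simp
  then have "var b1 a c \<in># MT b1' b2' a c'" by (simp only: eq)
  then have "var b1 a c \<in> {var b1' a c', var b2' c' a}" by (simp only: set_MT)
  then have "var b1 a c = var b1' a c' \<or> var b1 a c = var b2' c' a" by blast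
  moreover have "var b1 a c \<noteq> var b2' c' a" using var_inj[of a c c' a b1 b2'] ac by simp
  ultimately have "var b1 a c = var b1' a c'" by blast
  then have 1: "b1 = b1' \<and> c = c'" using var_inj[of a c a c' b1 b1'] ac by simp
  have "var b2 c a \<in># MT b1 b2 a c" by (simp only: set_MT) simp
  then have "var b2 c a \<in># MT b1' b2' a c'" by (simp only: eq)
  then have "var b2 c a \<in> {var b1' a c', var b2' c' a}" by (simp only: set_MT)
  then have "var b2 c a = var b1' a c' \<or> var b2 c a = var b2' c' a" by blast
  moreover have "var b2 c a \<noteq> var b1' a c'" using var_inj[of c a a c' b2 b1'] ac by simp
  ultimately have "var b2 c a = var b2' c' a" by blast
  then have "b2 = b2'" using var_inj[of c a c' a b2 b2'] ac by simp
  with 1 show ?thesis by simp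
qed

lemma MT_ne_MTA:
  assumes ac: "a \<noteq> c" "a < k" "c < k" "a' < k"
  shows "MT b1 b2 a c \<noteq> MT False True a' a'"
proof
  assume "MT b1 b2 a c = MT False True a' a'"
  moreover have "var b1 a c \<in># MT b1 b2 a c" by (simp only: set_MT) simp
  ultimately have "var b1 a c \<in># MT False True a' a'" by simp
  then have "var b1 a c \<in> {var False a' a', var True a' a'}" by (simp only: set_MT)
  moreover have "var b1 a c \<noteq> var False a' a'" using var_inj[of a c a' a' b1 False] ac by simp
  moreover have "var b1 a c \<noteq> var True a' a'" using var_inj[of a c a' a' b1 True] ac by simp
  ultimately show False by blast
qed

lemma alt_vals: "alt False True (2*t) = wXY t" "alt True False (2*t) = wYX t"
  "alt False False (2*t) = wX (2*t)" "alt True True (2*t) = wY (2*t)"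
  by (simp_all add: wXY_def wYX_def wX_def wY_def alt_concat alt_same)

lemma part4:
  assumes "i \<noteq> j" "twoletter t M"
  shows "entry var k p i j M = 0"
proof -
  from twoletter_cases[OF assms(2)] show ?thesis
  proof (elim disjE)
    assume "\<forall>i j. entry var k p i j M = 0" then show ?thesis by blast
  next
    assume "\<exists>b1 b2 a c. a < k \<and> c < k \<and> a \<noteq> c \<and> M = MT b1 b2 a c"
    then obtain b1 b2 a c where abc: "a < k" "c < k" "a \<noteq> c" "M = MT b1 b2 a c" by blast
    show ?thesis unfolding abc(4) entry_MT[OF abc(3,1,2)] using assms(1) by auto
  next
    assume "\<exists>a<k. M = MT False True a a"
    then obtain a where a: "a < k" "M = MT False True a a" by blast
    show ?thesis unfolding a(2) entry_MTA[OF a(1)] using assms(1) by auto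
  qed
qed


lemma part1:
  assumes c0: "c0 \<noteq> 0"
  shows "card {(i, j, M). i < k \<and> j < k \<and> twoletter t M \<and> entry var k p i j M = c0}
    = card {(b1,b2). p (alt b1 b2 (2*t)) = c0} * (k^2 - k) + (if phi p t t = c0 then k else 0)"
proof -
  define B where "B = {(b1,b2). p (alt b1 b2 (2*t)) = c0}"
  define Off where "Off = {(a, c). a < k \<and> c < k \<and> a \<noteq> c}"
  define f where "f = (\<lambda>((b1,b2),(a,c)). (a, a, MT b1 b2 a c))"
  define g where "g = (\<lambda>a. (a, a, MT False True a a))"
  define G where "G = (if phi p t t = c0 then g ` {..<k} else {})"
  have S: "{(i, j, M). i < k \<and> j < k \<and> twoletter t M \<and> entry var k p i j M = c0} = f ` (B \<times> Off) \<union> G"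
  proof (rule set_eqI, rule iffI)
    fix x assume "x \<in> {(i, j, M). i < k \<and> j < k \<and> twoletter t M \<and> entry var k p i j M = c0}"
    then obtain i j M where x: "x = (i, j, M)" and ij: "i < k" "j < k" and tl: "twoletter t M"
      and en: "entry var k p i j M = c0" by auto
    from twoletter_cases[OF tl] show "x \<in> f ` (B \<times> Off) \<union> G"
    proof (elim disjE)
      assume "\<forall>i j. entry var k p i j M = 0" then show ?thesis using en c0 by simp
    next
      assume "\<exists>b1 b2 a c. a < k \<and> c < k \<and> a \<noteq> c \<and> M = MT b1 b2 a c"
      then obtain b1 b2 a c where abc: "a < k" "c < k" "a \<noteq> c" "M = MT b1 b2 a c" by blast
      note E = entry_MT[OF abc(3,1,2), of i j b1 b2]
      show ?thesis
      proof (cases "i = a \<and> j = a")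
        case True
        then have "((b1,b2),(a,c)) \<in> B \<times> Off" using E en abc by (simp add: B_def Off_def)
        moreover have "x = f ((b1,b2),(a,c))" using x True abc by (simp add: f_def)
        ultimately show ?thesis by blast
      next
        case F: False
        show ?thesis
        proof (cases "i = c \<and> j = c")
          case True
          then have "((b2,b1),(c,a)) \<in> B \<times> Off" using E en abc F by (simp add: B_def Off_def)
          moreover have "x = f ((b2,b1),(c,a))" using x True abc by (simp add: f_def MT_swap)
          ultimately show ?thesis by blast
        next
          case False
          have "entry var k p i j M = 0" unfolding abc(4) E by (simp only: if_not_P[OF F] if_not_P[OF False])
          with en c0 show ?thesis by simp
        qed
      qed
    next
      assume "\<exists>a<k. M = MT False True a a"
      then obtain a where a: "a < k" "M = MT False True a a" by blast
      note E = entry_MTA[OF a(1), of i j]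
      have "i = a \<and> j = a \<and> phi p t t = c0"
      proof (rule ccontr)
        assume "\<not> (i = a \<and> j = a \<and> phi p t t = c0)"
        then show False using E en a c0 by (cases "i = a \<and> j = a") auto
      qed
      then show ?thesis using x a by (simp add: G_def g_def)
    qed
  next
    fix x assume "x \<in> f ` (B \<times> Off) \<union> G"
    then show "x \<in> {(i, j, M). i < k \<and> j < k \<and> twoletter t M \<and> entry var k p i j M = c0}"
    proof
      assume "x \<in> f ` (B \<times> Off)"
      then obtain b1 b2 a c where x: "x = (a, a, MT b1 b2 a c)" and abc: "a < k" "c < k" "a \<noteq> c"
        and pb: "p (alt b1 b2 (2*t)) = c0" by (auto simp: f_def B_def Off_def)
      then show ?thesis using twoletter_MT[of a c b1 b2] entry_MT[OF abc(3,1,2), of a a b1 b2] by simp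
    next
      assume "x \<in> G"
      then obtain a where x: "x = (a, a, MT False True a a)" and a: "a < k" and ph: "phi p t t = c0"
        by (auto simp: G_def g_def split: if_splits)
      then show ?thesis using twoletter_MT[of a a False True] entry_MTA[OF a, of a a] by simp
    qed
  qed
  have injf: "inj_on f (B \<times> Off)"
  proof (rule inj_onI)
    fix x y assume x: "x \<in> B \<times> Off" and y: "y \<in> B \<times> Off" and e: "f x = f y"
    obtain b1 b2 a c where xe: "x = ((b1,b2),(a,c))" by (metis prod.collapse)
    obtain b1' b2' a' c' where ye: "y = ((b1',b2'),(a',c'))" by (metis prod.collapse)
    have "a = a'" and M: "MT b1 b2 a c = MT b1' b2' a c'" using e xe ye by (auto simp: f_def)
    moreover have "a \<noteq> c" "a \<noteq> c'" "a < k" "c < k" "c' < k" using x y xe ye \<open>a = a'\<close> by (auto simp: Off_def)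
    ultimately show "x = y" using MT_eq[OF _ _ _ _ _ M] xe ye by auto
  qed
  have injg: "inj_on g {..<k}" by (rule inj_onI) (simp add: g_def)
  have disj: "f ` (B \<times> Off) \<inter> G = {}"
  proof -
    have H: "f x \<noteq> g a" if "x \<in> B \<times> Off" "a < k" for x a
    proof -
      obtain b1 b2 a1 c where xe: "x = ((b1,b2),(a1,c))" by (metis prod.collapse)
      then have "a1 \<noteq> c" "a1 < k" "c < k" using that by (auto simp: Off_def)
      then show ?thesis using MT_ne_MTA[of a1 c a] that xe by (auto simp: f_def g_def)
    qed
    show ?thesis
    proof (cases "phi p t t = c0")
      case True
      have "f ` (B \<times> Off) \<inter> g ` {..<k} = {}" using H by blast
      then show ?thesis using True by (simp add: G_def)
    next
      case False then show ?thesis by (simp add: G_def)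
    qed
  qed
  have finB: "finite B" by simp
  have finOff: "finite Off" unfolding Off_def by (rule finite_subset[of _ "{..<k} \<times> {..<k}"]) auto
  have cardG: "card G = (if phi p t t = c0 then k else 0)"
    using card_image[OF injg] by (simp add: G_def)
  have "card (f ` (B \<times> Off) \<union> G) = card (f ` (B \<times> Off)) + card G"
    by (rule card_Un_disjoint) (use finB finOff disj in \<open>auto simp: G_def\<close>)
  also have "card (f ` (B \<times> Off)) = card B * card Off"
    using card_image[OF injf] card_cartesian_product by simp
  finally show ?thesis using S cardG card_off by (simp add: B_def Off_def)
qed

end


context L28 begin

lemma set_O1: "set_mset (O1 b a) = {var b a a}"
  using t2 by (simp add: O1_def)

lemma O1_eq:
  assumes "a < k" "a' < k" "O1 b a = O1 b' a'"
  shows "b = b' \<and> a = a'"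
proof -
  have "var b a a \<in># O1 b a" by (simp only: set_O1) simp
  then have "var b a a \<in># O1 b' a'" using assms(3) by simp
  then have "var b a a = var b' a' a'" by (simp only: set_O1) simp
  then show ?thesis using var_inj[of a a a' a' b b'] assms by simp
qed

lemma oneletter_O1: "oneletter (2*t) (O1 b a)"
  unfolding oneletter_def O1_def by blast

lemma part2:
  assumes c0: "c0 \<noteq> 0"
  shows "card {(i, j, M). i < k \<and> j < k \<and> oneletter (2 * t) M \<and> entry var k p i j M = c0}
    = card {b. p (replicate (2*t) b) = c0} * k"
proof -
  define B where "B = {b. p (replicate (2*t) b) = c0}"
  define h where "h = (\<lambda>(b, a). (a, a, O1 b a))"
  have S: "{(i, j, M). i < k \<and> j < k \<and> oneletter (2 * t) M \<and> entry var k p i j M = c0} = h ` (B \<times> {..<k})"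
  proof (rule set_eqI, rule iffI)
    fix x assume "x \<in> {(i, j, M). i < k \<and> j < k \<and> oneletter (2 * t) M \<and> entry var k p i j M = c0}"
    then obtain i j M where x: "x = (i, j, M)" and ij: "i < k" "j < k" and ol: "oneletter (2*t) M"
      and en: "entry var k p i j M = c0" by auto
    from oneletter_cases[OF ol] show "x \<in> h ` (B \<times> {..<k})"
    proof
      assume "\<forall>i j. entry var k p i j M = 0" then show ?thesis using en c0 by simp
    next
      assume "\<exists>b a. a < k \<and> M = O1 b a"
      then obtain b a where a: "a < k" "M = O1 b a" by blast
      note E = entry_O1[OF a(1), of i j b]
      have "i = a \<and> j = a \<and> p (replicate (2*t) b) = c0"
      proof (rule ccontr)
        assume N: "\<not> (i = a \<and> j = a \<and> p (replicate (2*t) b) = c0)"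
        show False
        proof (cases "i = a \<and> j = a")
          case True then show False using N E en a by simp
        next
          case False
          have "entry var k p i j M = 0" unfolding a(2) E by (simp only: if_not_P[OF False])
          then show False using en c0 by simp
        qed
      qed
      then have "x = h (b, a)" "(b, a) \<in> B \<times> {..<k}" using x a by (auto simp: h_def B_def)
      then show ?thesis by blast
    qed
  next
    fix x assume "x \<in> h ` (B \<times> {..<k})"
    then obtain b a where x: "x = (a, a, O1 b a)" and a: "a < k" and pb: "p (replicate (2*t) b) = c0"
      by (auto simp: h_def B_def)
    then show "x \<in> {(i, j, M). i < k \<and> j < k \<and> oneletter (2 * t) M \<and> entry var k p i j M = c0}"
      using oneletter_O1[of b a] entry_O1[OF a, of a a b] by simp
  qed
  have inj: "inj_on h (B \<times> {..<k})"
  proof (rule inj_onI)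
    fix x y assume x: "x \<in> B \<times> {..<k}" and y: "y \<in> B \<times> {..<k}" and e: "h x = h y"
    obtain b a where xe: "x = (b, a)" by (metis prod.collapse)
    obtain b' a' where ye: "y = (b', a')" by (metis prod.collapse)
    have "a = a'" "O1 b a = O1 b' a'" using e xe ye by (auto simp: h_def)
    moreover have "a < k" "a' < k" using x y xe ye by auto
    ultimately show "x = y" using O1_eq xe ye by blast
  qed
  show ?thesis unfolding S card_image[OF inj] card_cartesian_product by (simp add: B_def)
qed

lemma diag_not_off: "a < k \<Longrightarrow> var b a a \<notin> offdiag_vars var k"
  unfolding offdiag_vars_def using var_inj by auto

lemma off_not_diag: "a \<noteq> c \<Longrightarrow> a < k \<Longrightarrow> c < k \<Longrightarrow> var b a c \<notin> diag_vars var k"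
  unfolding diag_vars_def using var_inj by auto

lemma part3a:
  assumes i: "i < k"
  shows "card {M. twoletter t M \<and> set_mset M \<subseteq> offdiag_vars var k \<and> entry var k p i i M \<noteq> 0}
    = card {(b1,b2). p (alt b1 b2 (2*t)) \<noteq> 0} * (k - 1)"
proof -
  define B where "B = {(b1,b2). p (alt b1 b2 (2*t)) \<noteq> 0}"
  define C where "C = {..<k} - {i}"
  define f where "f = (\<lambda>((b1,b2),c). MT b1 b2 i c)"
  have S: "{M. twoletter t M \<and> set_mset M \<subseteq> offdiag_vars var k \<and> entry var k p i i M \<noteq> 0} = f ` (B \<times> C)"
  proof (rule set_eqI, rule iffI)
    fix M assume "M \<in> {M. twoletter t M \<and> set_mset M \<subseteq> offdiag_vars var k \<and> entry var k p i i M \<noteq> 0}"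
    then have tl: "twoletter t M" and so: "set_mset M \<subseteq> offdiag_vars var k" and en: "entry var k p i i M \<noteq> 0" by auto
    from twoletter_cases[OF tl] show "M \<in> f ` (B \<times> C)"
    proof (elim disjE)
      assume "\<forall>i j. entry var k p i j M = 0" then show ?thesis using en by simp
    next
      assume "\<exists>b1 b2 a c. a < k \<and> c < k \<and> a \<noteq> c \<and> M = MT b1 b2 a c"
      then obtain b1 b2 a c where abc: "a < k" "c < k" "a \<noteq> c" "M = MT b1 b2 a c" by blast
      note E = entry_MT[OF abc(3,1,2), of i i b1 b2]
      show ?thesis
      proof (cases "i = a")
        case True
        then have "((b1,b2),c) \<in> B \<times> C" "M = f ((b1,b2),c)" using E en abc
          by (auto simp: B_def C_def f_def)
        then show ?thesis by blast
      next
        case F: False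
        show ?thesis
        proof (cases "i = c")
          case True
          then have "((b2,b1),a) \<in> B \<times> C" "M = f ((b2,b1),a)" using E en abc F
            by (auto simp: B_def C_def f_def MT_swap)
          then show ?thesis by blast
        next
          case False
          then show ?thesis using E en F abc(4) by simp
        qed
      qed
    next
      assume "\<exists>a<k. M = MT False True a a"
      then obtain a where a: "a < k" "M = MT False True a a" by blast
      have "var False a a \<in> set_mset M" using a by (simp add: set_MT)
      then show ?thesis using so diag_not_off[OF a(1)] by blast
    qed
  next
    fix M assume "M \<in> f ` (B \<times> C)"
    then obtain b1 b2 c where M: "M = MT b1 b2 i c" and c: "c < k" "c \<noteq> i" and pb: "p (alt b1 b2 (2*t)) \<noteq> 0"
      by (auto simp: f_def B_def C_def)
    have "set_mset M \<subseteq> offdiag_vars var k" using c i unfolding M set_MT offdiag_vars_def by blast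
    moreover have "twoletter t M" using M twoletter_MT[of i c b1 b2] c i by simp
    moreover have "entry var k p i i M \<noteq> 0" using M entry_MT[of i c i i b1 b2] c i pb by simp
    ultimately show "M \<in> {M. twoletter t M \<and> set_mset M \<subseteq> offdiag_vars var k \<and> entry var k p i i M \<noteq> 0}" by simp
  qed
  have inj: "inj_on f (B \<times> C)"
  proof (rule inj_onI)
    fix x y assume x: "x \<in> B \<times> C" and y: "y \<in> B \<times> C" and e: "f x = f y"
    obtain b1 b2 c where xe: "x = ((b1,b2),c)" by (metis prod.collapse)
    obtain b1' b2' c' where ye: "y = ((b1',b2'),c')" by (metis prod.collapse)
    have M: "MT b1 b2 i c = MT b1' b2' i c'" using e xe ye by (simp add: f_def)
    have "i \<noteq> c" "i \<noteq> c'" "c < k" "c' < k" using x y xe ye by (auto simp: C_def)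
    then show "x = y" using MT_eq[OF _ _ i _ _ M] xe ye by auto
  qed
  have "card C = k - 1" using i by (simp add: C_def)
  then show ?thesis unfolding S card_image[OF inj] card_cartesian_product by (simp add: B_def)
qed

lemma part3b:
  assumes i: "i < k"
  shows "card {M. twoletter t M \<and> set_mset M \<subseteq> diag_vars var k \<and> entry var k p i i M \<noteq> 0} = chi (phi p t t)"
proof -
  have S: "{M. twoletter t M \<and> set_mset M \<subseteq> diag_vars var k \<and> entry var k p i i M \<noteq> 0}
    = (if phi p t t \<noteq> 0 then {MT False True i i} else {})"
  proof (rule set_eqI, rule iffI)
    fix M assume "M \<in> {M. twoletter t M \<and> set_mset M \<subseteq> diag_vars var k \<and> entry var k p i i M \<noteq> 0}"
    then have tl: "twoletter t M" and so: "set_mset M \<subseteq> diag_vars var k" and en: "entry var k p i i M \<noteq> 0" by auto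
    from twoletter_cases[OF tl] show "M \<in> (if phi p t t \<noteq> 0 then {MT False True i i} else {})"
    proof (elim disjE)
      assume "\<forall>i j. entry var k p i j M = 0" then show ?thesis using en by simp
    next
      assume "\<exists>b1 b2 a c. a < k \<and> c < k \<and> a \<noteq> c \<and> M = MT b1 b2 a c"
      then obtain b1 b2 a c where abc: "a < k" "c < k" "a \<noteq> c" "M = MT b1 b2 a c" by blast
      have "var b1 a c \<in> set_mset M" using abc by (simp add: set_MT)
      then show ?thesis using so off_not_diag[OF abc(3,1,2)] by blast
    next
      assume "\<exists>a<k. M = MT False True a a"
      then obtain a where a: "a < k" "M = MT False True a a" by blast
      have "i = a \<and> phi p t t \<noteq> 0"
        using en entry_MTA[OF a(1), of i i] a(2) by (cases "i = a") auto
      then show ?thesis using a by simp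
    qed
  next
    fix M assume M: "M \<in> (if phi p t t \<noteq> 0 then {MT False True i i} else {})"
    then have Me: "M = MT False True i i" and ph: "phi p t t \<noteq> 0" by (auto split: if_splits)
    have "set_mset M \<subseteq> diag_vars var k" using i unfolding Me set_MT diag_vars_def by blast
    moreover have "twoletter t M" using Me twoletter_MT[of i i False True] i by simp
    moreover have "entry var k p i i M \<noteq> 0" using Me entry_MTA[OF i, of i i] ph by simp
    ultimately show "M \<in> {M. twoletter t M \<and> set_mset M \<subseteq> diag_vars var k \<and> entry var k p i i M \<noteq> 0}" by simp
  qed
  show ?thesis unfolding S by (simp add: chi_def)
qed

lemma part3c:
  assumes i: "i < k" and c0: "c0 \<noteq> 0" and pb: "p (replicate (2*t) b0) = c0" and pn: "p (replicate (2*t) (\<not> b0)) \<noteq> c0"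
  shows "{M. oneletter (2 * t) M \<and> entry var k p i i M = c0} = {O1 b0 i}"
proof (rule set_eqI, rule iffI)
  fix M assume "M \<in> {M. oneletter (2 * t) M \<and> entry var k p i i M = c0}"
  then have ol: "oneletter (2*t) M" and en: "entry var k p i i M = c0" by auto
  from oneletter_cases[OF ol] show "M \<in> {O1 b0 i}"
  proof
    assume "\<forall>i j. entry var k p i j M = 0" then show ?thesis using en c0 by simp
  next
    assume "\<exists>b a. a < k \<and> M = O1 b a"
    then obtain b a where a: "a < k" "M = O1 b a" by blast
    have "i = a \<and> p (replicate (2*t) b) = c0"
      using en entry_O1[OF a(1), of i i b] a(2) c0 by (cases "i = a") auto
    moreover have "b = b0" using calculation pn by (cases b; cases b0) auto
    ultimately show ?thesis using a by simp
  qed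
next
  fix M assume "M \<in> {O1 b0 i}"
  then show "M \<in> {M. oneletter (2 * t) M \<and> entry var k p i i M = c0}"
    using oneletter_O1[of b0 i] entry_O1[OF i, of i i b0] pb by simp
qed

lemma O1_diag: "a < k \<Longrightarrow> set_mset (O1 b a) \<subseteq> diag_vars var k"
  unfolding set_O1 diag_vars_def by blast

end

theorem lemma2p8:
  fixes k t :: nat and var :: "bool \<Rightarrow> nat \<Rightarrow> nat \<Rightarrow> nat" and p :: ncpoly
    and e1 e2 e3 e4 :: real
  assumes k: "k \<ge> 1"
    and vars: "bij_betw (\<lambda>(b, i, j). var b i j) (UNIV \<times> {..<k} \<times> {..<k}) {1..2 * k^2}"
    and fin: "finite (nc_support p)"
    and deg: "nc_degree p > 1"
    and t: "t \<ge> 2"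
    and c1: "p (wXY t) = e1" and c2: "p (wYX t) = e2"
    and c3: "p (wX (2 * t)) = e3" and c4: "p (wY (2 * t)) = e4"
    and dist: "e1 \<noteq> e2" "e1 \<noteq> e3" "e1 \<noteq> e4" "e2 \<noteq> e3" "e2 \<noteq> e4" "e3 \<noteq> e4"
  shows
    "(\<forall>c. c \<noteq> 0 \<longrightarrow>
        card {(i, j, M). i < k \<and> j < k \<and> twoletter t M \<and> entry var k p i j M = c}
        = (if e1 = c then k^2 - k else 0) + (if e2 = c then k^2 - k else 0)
          + (if e3 = c then k^2 - k else 0) + (if e4 = c then k^2 - k else 0)
          + (if phi p t t = c then k else 0))
   \<and> (\<forall>c. c \<noteq> 0 \<longrightarrow>
        card {(i, j, M). i < k \<and> j < k \<and> oneletter (2 * t) M \<and> entry var k p i j M = c}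
        = (if e3 = c then k else 0) + (if e4 = c then k else 0))
   \<and> (\<forall>i<k.
        card {M. twoletter t M \<and> set_mset M \<subseteq> offdiag_vars var k \<and> entry var k p i i M \<noteq> 0}
          = (chi e1 + chi e2 + chi e3 + chi e4) * (k - 1)
      \<and> card {M. twoletter t M \<and> set_mset M \<subseteq> diag_vars var k \<and> entry var k p i i M \<noteq> 0}
          = chi (phi p t t)
      \<and> (e3 \<noteq> 0 \<longrightarrow> card {M. oneletter (2 * t) M \<and> entry var k p i i M = e3} = 1
           \<and> (\<forall>M. oneletter (2 * t) M \<and> entry var k p i i M = e3 \<longrightarrow> set_mset M \<subseteq> diag_vars var k))
      \<and> (e4 \<noteq> 0 \<longrightarrow> card {M. oneletter (2 * t) M \<and> entry var k p i i M = e4} = 1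
           \<and> (\<forall>M. oneletter (2 * t) M \<and> entry var k p i i M = e4 \<longrightarrow> set_mset M \<subseteq> diag_vars var k)))
   \<and> (\<forall>i<k. \<forall>j<k. i \<noteq> j \<longrightarrow> (\<forall>M. twoletter t M \<longrightarrow> entry var k p i j M = 0))"
proof -
  have L: "L28 k t var p" using vars fin t by (simp add: L28_def)
  interpret L: L28 k t var p by (rule L)
  have wXr: "wX (2*t) = replicate (2*t) False" and wYr: "wY (2*t) = replicate (2*t) True"
    by (simp_all add: wX_def wY_def)
  have P1: "\<forall>c. c \<noteq> 0 \<longrightarrow>
        card {(i, j, M). i < k \<and> j < k \<and> twoletter t M \<and> entry var k p i j M = c}
        = (if e1 = c then k^2 - k else 0) + (if e2 = c then k^2 - k else 0)
          + (if e3 = c then k^2 - k else 0) + (if e4 = c then k^2 - k else 0)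
          + (if phi p t t = c then k else 0)"
  proof (intro allI impI)
    fix c :: real assume c: "c \<noteq> 0"
    have "card {(b1, b2). p (alt b1 b2 (2*t)) = c} = (if e3 = c then 1 else 0) + (if e1 = c then 1 else 0)
      + (if e2 = c then 1 else 0) + (if e4 = c then 1 else 0)"
      using card_bool2[of "\<lambda>(b1, b2). p (alt b1 b2 (2*t)) = c"]
      by (simp add: L.alt_vals c1 c2 c3 c4)
    then show "card {(i, j, M). i < k \<and> j < k \<and> twoletter t M \<and> entry var k p i j M = c}
        = (if e1 = c then k^2 - k else 0) + (if e2 = c then k^2 - k else 0)
          + (if e3 = c then k^2 - k else 0) + (if e4 = c then k^2 - k else 0)
          + (if phi p t t = c then k else 0)"
      using L.part1[OF c] by (simp add: distrib_right)
  qed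
  have P2: "\<forall>c. c \<noteq> 0 \<longrightarrow>
        card {(i, j, M). i < k \<and> j < k \<and> oneletter (2 * t) M \<and> entry var k p i j M = c}
        = (if e3 = c then k else 0) + (if e4 = c then k else 0)"
  proof (intro allI impI)
    fix c :: real assume c: "c \<noteq> 0"
    have "card {b. p (replicate (2*t) b) = c} = (if e3 = c then 1 else 0) + (if e4 = c then 1 else 0)"
      using card_bool1[of "\<lambda>b. p (replicate (2*t) b) = c"] c3 c4 wXr wYr by simp
    then show "card {(i, j, M). i < k \<and> j < k \<and> oneletter (2 * t) M \<and> entry var k p i j M = c}
        = (if e3 = c then k else 0) + (if e4 = c then k else 0)"
      using L.part2[OF c] by (simp add: distrib_right)
  qed
  have P3: "\<forall>i<k.
        card {M. twoletter t M \<and> set_mset M \<subseteq> offdiag_vars var k \<and> entry var k p i i M \<noteq> 0}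
          = (chi e1 + chi e2 + chi e3 + chi e4) * (k - 1)
      \<and> card {M. twoletter t M \<and> set_mset M \<subseteq> diag_vars var k \<and> entry var k p i i M \<noteq> 0}
          = chi (phi p t t)
      \<and> (e3 \<noteq> 0 \<longrightarrow> card {M. oneletter (2 * t) M \<and> entry var k p i i M = e3} = 1
           \<and> (\<forall>M. oneletter (2 * t) M \<and> entry var k p i i M = e3 \<longrightarrow> set_mset M \<subseteq> diag_vars var k))
      \<and> (e4 \<noteq> 0 \<longrightarrow> card {M. oneletter (2 * t) M \<and> entry var k p i i M = e4} = 1
           \<and> (\<forall>M. oneletter (2 * t) M \<and> entry var k p i i M = e4 \<longrightarrow> set_mset M \<subseteq> diag_vars var k))"
  proof (rule allI, rule impI, intro conjI impI)
    fix i assume i: "i < k"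
    have "card {(b1, b2). p (alt b1 b2 (2*t)) \<noteq> 0} = chi e1 + chi e2 + chi e3 + chi e4"
      using card_bool2[of "\<lambda>(b1, b2). p (alt b1 b2 (2*t)) \<noteq> 0"]
      by (simp add: L.alt_vals c1 c2 c3 c4 chi_def)
    then show "card {M. twoletter t M \<and> set_mset M \<subseteq> offdiag_vars var k \<and> entry var k p i i M \<noteq> 0}
          = (chi e1 + chi e2 + chi e3 + chi e4) * (k - 1)"
      using L.part3a[OF i] by simp
    show "card {M. twoletter t M \<and> set_mset M \<subseteq> diag_vars var k \<and> entry var k p i i M \<noteq> 0}
          = chi (phi p t t)" using L.part3b[OF i] .
    assume e3: "e3 \<noteq> 0"
    have S3: "{M. oneletter (2 * t) M \<and> entry var k p i i M = e3} = {L.O1 False i}"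
      by (rule L.part3c[OF i e3]) (use c3 c4 wXr wYr dist in simp_all)
    then show "card {M. oneletter (2 * t) M \<and> entry var k p i i M = e3} = 1" by simp
    show "\<forall>M. oneletter (2 * t) M \<and> entry var k p i i M = e3 \<longrightarrow> set_mset M \<subseteq> diag_vars var k"
    proof (intro allI impI)
      fix M assume "oneletter (2 * t) M \<and> entry var k p i i M = e3"
      then have "M \<in> {M. oneletter (2 * t) M \<and> entry var k p i i M = e3}" by simp
      then have "M = L.O1 False i" unfolding S3 by simp
      then show "set_mset M \<subseteq> diag_vars var k" using L.O1_diag[OF i] by simp
    qed
  next
    fix i assume i: "i < k"
    assume e4: "e4 \<noteq> 0"
    have S4: "{M. oneletter (2 * t) M \<and> entry var k p i i M = e4} = {L.O1 True i}"
      by (rule L.part3c[OF i e4]) (use c3 c4 wXr wYr dist in simp_all)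
    then show "card {M. oneletter (2 * t) M \<and> entry var k p i i M = e4} = 1" by simp
    show "\<forall>M. oneletter (2 * t) M \<and> entry var k p i i M = e4 \<longrightarrow> set_mset M \<subseteq> diag_vars var k"
    proof (intro allI impI)
      fix M assume "oneletter (2 * t) M \<and> entry var k p i i M = e4"
      then have "M \<in> {M. oneletter (2 * t) M \<and> entry var k p i i M = e4}" by simp
      then have "M = L.O1 True i" unfolding S4 by simp
      then show "set_mset M \<subseteq> diag_vars var k" using L.O1_diag[OF i] by simp
    qed
  qed
  have P4: "\<forall>i<k. \<forall>j<k. i \<noteq> j \<longrightarrow> (\<forall>M. twoletter t M \<longrightarrow> entry var k p i j M = 0)"
    using L.part4 by blast
  show ?thesis using P1 P2 P3 P4 by blast
qed

end
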